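(* Let $f,g\in\mathbb{R}[x_1,\dots,x_n]$ be forms, where $f$ is nonconstant with strictly positive coefficients and $g(x)>0$ for all $x\in\mathbb{R}_+^n\setminus\{0\}$. Then there exists an integer $l\ge1$ such that $f^lg$ has strictly positive coefficients.
   Context: A form is a homogeneous polynomial. A form $f=\sum_{|w|=d}a_wx^w$ of degree $d$ has strictly positive coefficients if $a_w>0$ for every $w\in\mathbb{Z}_{\ge0}^n$ with $|w|=d$. $\mathbb{R}_+^n=\{x\in\mathbb{R}^n: x_i\ge0\ \forall i\}$. *)

theory Defs
  imports Complex_Main "HOL-Library.Poly_Mapping"
begin

text \<open>Real polynomials in the variables x_0,...,x_(n-1): finitely supported maps from
exponent vectors (nat =>0 nat, variable index to exponent) to real coefficients.
Multiplication is the convolution product provided by Poly_Mapping.\<close>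

type_synonym rpoly = "(nat \<Rightarrow>\<^sub>0 nat) \<Rightarrow>\<^sub>0 real"

definition mdeg :: "(nat \<Rightarrow>\<^sub>0 nat) \<Rightarrow> nat" where
  "mdeg w = (\<Sum>i\<in>Poly_Mapping.keys w. Poly_Mapping.lookup w i)"

definition monos_deg :: "nat \<Rightarrow> nat \<Rightarrow> (nat \<Rightarrow>\<^sub>0 nat) set" where
  "monos_deg n d = {w. Poly_Mapping.keys w \<subseteq> {..<n} \<and> mdeg w = d}"

definition is_form :: "nat \<Rightarrow> nat \<Rightarrow> rpoly \<Rightarrow> bool" where
  "is_form n d p \<longleftrightarrow> Poly_Mapping.keys p \<subseteq> monos_deg n d"

definition strictly_pos_form :: "nat \<Rightarrow> nat \<Rightarrow> rpoly \<Rightarrow> bool" where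
  "strictly_pos_form n d p \<longleftrightarrow> is_form n d p \<and> (\<forall>w\<in>monos_deg n d. Poly_Mapping.lookup p w > 0)"

definition peval :: "rpoly \<Rightarrow> (nat \<Rightarrow> real) \<Rightarrow> real" where
  "peval p x = (\<Sum>w\<in>Poly_Mapping.keys p. Poly_Mapping.lookup p w * (\<Prod>i\<in>Poly_Mapping.keys w. x i ^ Poly_Mapping.lookup w i))"

end

theory Submission
  imports Defs "HOL-Analysis.Analysis"
begin

abbreviation lk where "lk \<equiv> Poly_Mapping.lookup"
abbreviation ks where "ks \<equiv> Poly_Mapping.keys"

lemma lookup_mult_keys:
  fixes p q :: "('a::monoid_add) \<Rightarrow>\<^sub>0 ('b::semiring_0)"
  shows "lk (p*q) k = (\<Sum>a\<in>ks p. \<Sum>b\<in>ks q. lk p a * lk q b when k = a + b)"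
proof -
  have i: "(\<Sum>b. lk q b when k = a + b) = (\<Sum>b\<in>ks q. lk q b when k = a + b)" for a
    by (rule Sum_any.expand_superset) (auto simp: in_keys_iff)
  have "lk (p*q) k = (\<Sum>a. lk p a * (\<Sum>b\<in>ks q. lk q b when k = a + b))"
    by (simp add: lookup_mult i)
  also have "\<dots> = (\<Sum>a\<in>ks p. lk p a * (\<Sum>b\<in>ks q. lk q b when k = a + b))"
    by (rule Sum_any.expand_superset) (auto simp: in_keys_iff)
  also have "\<dots> = (\<Sum>a\<in>ks p. \<Sum>b\<in>ks q. lk p a * lk q b when k = a + b)"
    by (simp add: sum_distrib_left mult_when)
  finally show ?thesis .
qed

lemma lookup_mult_sub:
  fixes p q :: "('a::cancel_comm_monoid_add) \<Rightarrow>\<^sub>0 ('b::semiring_0)"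
  shows "lk (p*q) k = (\<Sum>a\<in>ks p. (lk p a * lk q (k - a) when (\<exists>b. k = a + b)))"
  unfolding lookup_mult_keys
proof (rule sum.cong[OF refl])
  fix a assume "a \<in> ks p"
  show "(\<Sum>b\<in>ks q. lk p a * lk q b when k = a + b) = (lk p a * lk q (k - a) when (\<exists>b. k = a + b))"
  proof (cases "\<exists>b. k = a + b")
    case True
    then obtain b0 where b0: "k = a + b0" by blast
    have "(\<Sum>b\<in>ks q. lk p a * lk q b when k = a + b) = (\<Sum>b\<in>ks q. lk p a * lk q b when b = b0)"
      by (rule sum.cong) (auto simp: b0 when_def)
    also have "\<dots> = lk p a * lk q b0"
      by (cases "b0 \<in> ks q") (auto simp: when_def in_keys_iff)
    finally show ?thesis using True b0 by simp
  next
    case False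
    then show ?thesis by (auto simp: when_def)
  qed
qed

lemma lk_single_mult:
  fixes p :: "('a::cancel_comm_monoid_add) \<Rightarrow>\<^sub>0 ('b::semiring_0)"
  shows "lk (Poly_Mapping.single u c * p) k = (c * lk p (k - u) when (\<exists>b. k = u + b))"
proof (cases "c = 0")
  case True then show ?thesis by (simp add: when_def)
next
  case False
  then show ?thesis by (simp add: lookup_mult_sub)
qed

definition cnn :: "rpoly \<Rightarrow> bool" where "cnn p \<longleftrightarrow> (\<forall>k. lk p k \<ge> 0)"

lemma cnn_mult: "cnn p \<Longrightarrow> cnn q \<Longrightarrow> cnn (p * q)"
  unfolding cnn_def lookup_mult_keys
  by (auto intro!: sum_nonneg simp: when_def)

lemma cnn_add: "cnn p \<Longrightarrow> cnn q \<Longrightarrow> cnn (p + q)"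
  unfolding cnn_def by (auto simp: lookup_add)

lemma cnn_one: "cnn 1"
  unfolding cnn_def by (auto simp: lookup_one when_def)

lemma cnn_pow: "cnn p \<Longrightarrow> cnn (p ^ k)"
  by (induction k) (auto intro: cnn_mult cnn_one)

lemma cnn_sum: "(\<And>i. i \<in> I \<Longrightarrow> cnn (f i)) \<Longrightarrow> cnn (sum f I)"
  unfolding cnn_def by (auto simp: lookup_sum intro!: sum_nonneg)

definition sc :: "real \<Rightarrow> rpoly" where "sc c = Poly_Mapping.single 0 c"

lemma lk_sc_mult: "lk (sc c * p) k = c * lk p k"
  unfolding sc_def lk_single_mult by (simp add: when_def)

lemma sc_mult: "sc a * sc b = sc (a * b)"
  unfolding sc_def by (simp add: mult_single)

lemma sc_pow: "sc a ^ k = sc (a ^ k)"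
  by (induction k) (auto simp: sc_mult, simp add: sc_def)

lemma cnn_sc: "c \<ge> 0 \<Longrightarrow> cnn p \<Longrightarrow> cnn (sc c * p)"
  unfolding cnn_def lk_sc_mult by auto

definition cle :: "rpoly \<Rightarrow> rpoly \<Rightarrow> bool" where "cle p q \<longleftrightarrow> cnn (q - p)"

lemma cle_iff: "cle p q \<longleftrightarrow> (\<forall>k. lk p k \<le> lk q k)"
  unfolding cle_def cnn_def by (simp add: lookup_minus)

lemma cle_mult_right: "cle p q \<Longrightarrow> cnn r \<Longrightarrow> cle (p * r) (q * r)"
  unfolding cle_def by (metis cnn_mult left_diff_distrib)

lemma cle_mult_left: "cle p q \<Longrightarrow> cnn r \<Longrightarrow> cle (r * p) (r * q)"
  by (metis cle_mult_right mult.commute)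

lemma cle_trans: "cle p q \<Longrightarrow> cle q r \<Longrightarrow> cle p r"
  unfolding cle_iff by (meson order_trans)

lemma cle_add: "cle p q \<Longrightarrow> cle p' q' \<Longrightarrow> cle (p + p') (q + q')"
  unfolding cle_iff by (simp add: lookup_add add_mono)

lemma cle_pow: "cle p q \<Longrightarrow> cnn p \<Longrightarrow> cle (p ^ k) (q ^ k)"
proof (induction k)
  case 0 then show ?case by (simp add: cle_iff)
next
  case (Suc k)
  have q: "cnn q" using Suc.prems unfolding cle_iff cnn_def by (meson order_trans)
  have "cle (p * p ^ k) (q * p ^ k)" by (rule cle_mult_right) (use Suc cnn_pow in auto)
  moreover have "cle (q * p ^ k) (q * q ^ k)" by (rule cle_mult_left) (use Suc q in auto)
  ultimately show ?case by (auto intro: cle_trans)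
qed

subsection \<open>Degrees\<close>

lemma mdeg_superset: "finite S \<Longrightarrow> ks w \<subseteq> S \<Longrightarrow> mdeg w = (\<Sum>i\<in>S. lk w i)"
  unfolding mdeg_def by (rule sum.mono_neutral_left) (auto simp: in_keys_iff)

lemma keys_add_nat: "ks (a + b) = ks a \<union> ks (b :: 'a \<Rightarrow>\<^sub>0 nat)"
  by (auto simp: in_keys_iff lookup_add)

lemma mdeg_add: "mdeg (a + b) = mdeg a + mdeg b"
proof -
  let ?S = "ks a \<union> ks b"
  have "mdeg (a + b) = (\<Sum>i\<in>?S. lk (a+b) i)" by (rule mdeg_superset) (auto simp: keys_add_nat)
  also have "\<dots> = (\<Sum>i\<in>?S. lk a i) + (\<Sum>i\<in>?S. lk b i)" by (simp add: lookup_add sum.distrib)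
  also have "(\<Sum>i\<in>?S. lk a i) = mdeg a" by (rule mdeg_superset[symmetric]) auto
  also have "(\<Sum>i\<in>?S. lk b i) = mdeg b" by (rule mdeg_superset[symmetric]) auto
  finally show ?thesis .
qed

lemma mdeg_single: "mdeg (Poly_Mapping.single i k) = k"
  unfolding mdeg_def by (cases "k = 0") auto

lemma mdeg_zero_iff: "mdeg w = 0 \<longleftrightarrow> w = 0"
  unfolding mdeg_def by (auto simp: in_keys_iff poly_mapping_eq_iff fun_eq_iff)

lemma mdeg_lt: "ks w \<subseteq> {..<n} \<Longrightarrow> mdeg w = (\<Sum>i<n. lk w i)"
  by (rule mdeg_superset) auto

lemma is_form_mult: "is_form n d p \<Longrightarrow> is_form n e q \<Longrightarrow> is_form n (d + e) (p * q)"
  unfolding is_form_def monos_deg_def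
  using keys_mult[of p q] by (force simp: keys_add_nat mdeg_add)

lemma is_form_one: "is_form n 0 1"
  unfolding is_form_def monos_deg_def by (auto simp: mdeg_def)

lemma is_form_pow: "is_form n d p \<Longrightarrow> is_form n (k * d) (p ^ k)"
  by (induction k) (auto simp: is_form_one dest: is_form_mult)

lemma is_form_add: "is_form n d p \<Longrightarrow> is_form n d q \<Longrightarrow> is_form n d (p + q)"
  unfolding is_form_def using keys_add[of p q] by blast

lemma is_form_sc: "is_form n d p \<Longrightarrow> is_form n d (sc c * p)"
  unfolding is_form_def by (auto simp: in_keys_iff lk_sc_mult)

lemma is_form_lookup: "is_form n d p \<Longrightarrow> w \<notin> monos_deg n d \<Longrightarrow> lk p w = 0"
  unfolding is_form_def by (auto simp: in_keys_iff)

subsection \<open>The form s = x_0 + ... + x_(n-1)\<close>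

definition sv :: "nat \<Rightarrow> rpoly" where
  "sv n = (\<Sum>i<n. Poly_Mapping.single (Poly_Mapping.single i 1) 1)"

lemma ex_add_single_iff: "(\<exists>b. k = Poly_Mapping.single i 1 + b) \<longleftrightarrow> 1 \<le> lk (k::nat\<Rightarrow>\<^sub>0nat) (i::nat)"
proof
  assume "\<exists>b. k = Poly_Mapping.single i 1 + b"
  then show "1 \<le> lk k i" by (auto simp: lookup_add)
next
  assume a: "1 \<le> lk k i"
  have "k = Poly_Mapping.single i 1 + (k - Poly_Mapping.single i 1)"
    using a by (auto simp: poly_mapping_eq_iff fun_eq_iff lookup_add lookup_minus lookup_single when_def)
  then show "\<exists>b. k = Poly_Mapping.single i 1 + b" by blast
qed

lemma lk_sv_mult: "lk (sv n * p) k = (\<Sum>i<n. (lk p (k - Poly_Mapping.single i 1) when 1 \<le> lk k i))"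
  unfolding sv_def sum_distrib_right lookup_sum lk_single_mult ex_add_single_iff by simp

definition mcoef :: "nat \<Rightarrow> nat \<Rightarrow> (nat \<Rightarrow>\<^sub>0 nat) \<Rightarrow> real" where
  "mcoef n N a = (if ks a \<subseteq> {..<n} \<and> mdeg a = N then fact N / (\<Prod>i<n. fact (lk a i)) else 0)"

lemma lk_minus_single: "lk (a - Poly_Mapping.single i 1) j = lk a j - (if i = j then 1 else 0)"
  by (simp add: lookup_minus lookup_single when_def)

lemma keys_minus_nat: "ks (a - b) \<subseteq> ks (a :: 'a \<Rightarrow>\<^sub>0 nat)"
  by (auto simp: in_keys_iff lookup_minus)

lemma prod_fact_minus:
  fixes a :: "nat \<Rightarrow>\<^sub>0 nat"
  assumes "i < n" "1 \<le> lk a i"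
  shows "(\<Prod>j<n. fact (lk (a - Poly_Mapping.single i 1) j)) * real (lk a i) = (\<Prod>j<n. fact (lk a j) :: real)"
proof -
  have fin: "finite {..<n}" by simp
  have "(\<Prod>j<n. fact (lk (a - Poly_Mapping.single i 1) j) :: real)
     = fact (lk (a - Poly_Mapping.single i 1) i) * (\<Prod>j\<in>{..<n}-{i}. fact (lk (a - Poly_Mapping.single i 1) j))"
    by (rule prod.remove) (use assms in auto)
  also have "lk (a - Poly_Mapping.single i 1) i = lk a i - 1" by (simp add: lookup_minus)
  also have "(\<Prod>j\<in>{..<n}-{i}. fact (lk (a - Poly_Mapping.single i 1) j) :: real) = (\<Prod>j\<in>{..<n}-{i}. fact (lk a j))"
    by (rule prod.cong) (auto simp: lookup_minus lookup_single when_def)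
  finally have "(\<Prod>j<n. fact (lk (a - Poly_Mapping.single i 1) j)) * real (lk a i)
     = (fact (lk a i - 1) * real (lk a i)) * (\<Prod>j\<in>{..<n}-{i}. fact (lk a j) :: real)" by simp
  also have "fact (lk a i - 1) * real (lk a i) = fact (lk a i)"
    using assms(2) by (metis fact_reduce mult.commute of_nat_0_less_iff less_le_trans zero_less_one)
  also have "fact (lk a i) * (\<Prod>j\<in>{..<n}-{i}. fact (lk a j) :: real) = (\<Prod>j<n. fact (lk a j))"
    by (rule prod.remove[symmetric]) (use assms in auto)
  finally show ?thesis .
qed

lemma lk_sv_pow: "lk (sv n ^ N) a = mcoef n N a"
proof (induction N arbitrary: a)
  case 0
  show ?case
  proof (cases "a = 0")
    case True then show ?thesis by (simp add: mcoef_def mdeg_def)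
  next
    case False then show ?thesis by (simp add: mcoef_def lookup_one mdeg_zero_iff when_def)
  qed
next
  case (Suc N)
  have eq: "lk (sv n ^ Suc N) a = (\<Sum>i<n. (mcoef n N (a - Poly_Mapping.single i 1) when 1 \<le> lk a i))"
    by (simp add: lk_sv_mult Suc.IH)
  show ?case
  proof (cases "ks a \<subseteq> {..<n} \<and> mdeg a = Suc N")
    case True
    have dec: "a = Poly_Mapping.single i 1 + (a - Poly_Mapping.single i 1)" if "1 \<le> lk a i" for i
      using that by (auto simp: poly_mapping_eq_iff fun_eq_iff lookup_add lookup_minus lookup_single when_def)
    have tm: "(mcoef n N (a - Poly_Mapping.single i 1) when 1 \<le> lk a i) = fact N * real (lk a i) / (\<Prod>j<n. fact (lk a j))"
      if i: "i < n" for i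
    proof (cases "1 \<le> lk a i")
      case True
      have k: "ks (a - Poly_Mapping.single i 1) \<subseteq> {..<n}"
        using keys_minus_nat[of a] \<open>ks a \<subseteq> {..<n} \<and> mdeg a = Suc N\<close> by blast
      have "mdeg a = 1 + mdeg (a - Poly_Mapping.single i 1)"
        using dec[OF True] mdeg_add mdeg_single by metis
      then have m: "mdeg (a - Poly_Mapping.single i 1) = N" using True \<open>ks a \<subseteq> {..<n} \<and> mdeg a = Suc N\<close> by simp
      have pf: "(\<Prod>j<n. fact (lk (a - Poly_Mapping.single i 1) j)) * real (lk a i) = (\<Prod>j<n. fact (lk a j) :: real)"
        by (rule prod_fact_minus[OF i True])
      have nz: "(\<Prod>j<n. fact (lk (a - Poly_Mapping.single i 1) j) :: real) \<noteq> 0" by simp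
      show ?thesis using True k m pf nz by (auto simp: mcoef_def field_simps)
    next
      case False then show ?thesis by simp
    qed
    have "lk (sv n ^ Suc N) a = (\<Sum>i<n. fact N * real (lk a i) / (\<Prod>j<n. fact (lk a j)))"
      unfolding eq by (rule sum.cong[OF refl], rule tm, simp)
    also have "\<dots> = fact N * real (\<Sum>i<n. lk a i) / (\<Prod>j<n. fact (lk a j))"
      by (simp add: sum_divide_distrib[symmetric] sum_distrib_left)
    also have "(\<Sum>i<n. lk a i) = Suc N" using True mdeg_lt by metis
    also have "fact N * real (Suc N) = fact (Suc N)" by (simp add: fact_Suc)
    finally show ?thesis using True by (simp add: mcoef_def)
  next
    case False
    have "(mcoef n N (a - Poly_Mapping.single i 1) when 1 \<le> lk a i) = 0" if i: "i < n" for i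
    proof (cases "1 \<le> lk a i")
      case True
      have dec: "a = Poly_Mapping.single i 1 + (a - Poly_Mapping.single i 1)"
        using True by (auto simp: poly_mapping_eq_iff fun_eq_iff lookup_add lookup_minus lookup_single when_def)
      have "\<not> (ks (a - Poly_Mapping.single i 1) \<subseteq> {..<n} \<and> mdeg (a - Poly_Mapping.single i 1) = N)"
      proof
        assume h: "ks (a - Poly_Mapping.single i 1) \<subseteq> {..<n} \<and> mdeg (a - Poly_Mapping.single i 1) = N"
        have "ks a \<subseteq> {..<n}" using h i keys_add_nat dec
          by (metis Un_least keys_single empty_subsetI insert_subset lessThan_iff)
        moreover have "mdeg a = Suc N" using h dec mdeg_add mdeg_single by (metis plus_1_eq_Suc)
        ultimately show False using False by blast
      qed
      then show ?thesis by (auto simp: mcoef_def)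
    next
      case False then show ?thesis by simp
    qed
    then have z: "(\<Sum>i<n. (mcoef n N (a - Poly_Mapping.single i 1) when 1 \<le> lk a i)) = 0" by simp
    show ?thesis unfolding eq z using False by (simp add: mcoef_def)
  qed
qed

lemma is_form_sv_pow: "is_form n N (sv n ^ N)"
  unfolding is_form_def
proof
  fix w assume "w \<in> ks (sv n ^ N)"
  then have "mcoef n N w \<noteq> 0" by (simp add: in_keys_iff lk_sv_pow)
  then show "w \<in> monos_deg n N" unfolding mcoef_def monos_deg_def by (auto split: if_splits)
qed

lemma cnn_sv_pow: "cnn (sv n ^ N)"
  unfolding cnn_def lk_sv_pow mcoef_def by (auto intro!: divide_nonneg_nonneg prod_nonneg)

lemma sv_pow_pos: "a \<in> monos_deg n N \<Longrightarrow> lk (sv n ^ N) a > 0"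
  unfolding lk_sv_pow mcoef_def monos_deg_def by (auto intro!: divide_pos_pos prod_pos)

definition ffr :: "nat \<Rightarrow> nat \<Rightarrow> real" where "ffr a b = (\<Prod>j<b. (real a - real j))"

lemma ffr_fact: "b \<le> a \<Longrightarrow> ffr a b * fact (a - b) = fact a"
proof (induction b)
  case 0 then show ?case by (simp add: ffr_def)
next
  case (Suc b)
  have e: "a - b = Suc (a - Suc b)" using Suc.prems by arith
  have f1: "(fact (a - b) :: real) = (real a - real b) * fact (a - Suc b)"
    unfolding e fact_Suc using Suc.prems by (simp add: of_nat_diff)
  have f2: "ffr a (Suc b) = ffr a b * (real a - real b)" by (simp add: ffr_def)
  have "ffr a (Suc b) * fact (a - Suc b) = ffr a b * fact (a - b)" unfolding f1 f2 by simp
  also have "\<dots> = fact a" using Suc by simp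
  finally show ?case .
qed

lemma ffr_zero: "a < b \<Longrightarrow> ffr a b = 0"
  unfolding ffr_def by (rule prod_zero) auto

lemma ex_add_iff: "(\<exists>c. a = b + c) \<longleftrightarrow> (\<forall>i. lk b i \<le> lk (a::'x \<Rightarrow>\<^sub>0 nat) i)"
proof
  assume "\<exists>c. a = b + c" then show "\<forall>i. lk b i \<le> lk a i" by (auto simp: lookup_add)
next
  assume h: "\<forall>i. lk b i \<le> lk a i"
  have "a = b + (a - b)" using h by (auto simp: poly_mapping_eq_iff fun_eq_iff lookup_add lookup_minus)
  then show "\<exists>c. a = b + c" by blast
qed

lemma coef_term:
  assumes b: "b \<in> monos_deg n e" and a: "a \<in> monos_deg n (N + e)"
  shows "(mcoef n N (a - b) when (\<exists>c. a = b + c)) * (\<Prod>i<n. fact (lk a i))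
         = fact N * (\<Prod>i<n. ffr (lk a i) (lk b i))"
proof (cases "\<exists>c. a = b + c")
  case True
  then obtain c where c: "a = b + c" by blast
  have le: "lk b i \<le> lk a i" for i using c by (simp add: lookup_add)
  have amb: "a - b = c" using c by simp
  have k: "ks (a - b) \<subseteq> {..<n}" using keys_minus_nat[of a b] a unfolding monos_deg_def by blast
  have "mdeg a = mdeg b + mdeg c" using c mdeg_add by blast
  then have m: "mdeg (a - b) = N" using a b amb unfolding monos_deg_def by simp
  have lab: "lk (a - b) i = lk a i - lk b i" for i by (simp add: lookup_minus)
  have "(\<Prod>i<n. fact (lk a i) :: real) = (\<Prod>i<n. ffr (lk a i) (lk b i) * fact (lk a i - lk b i))"
    by (rule prod.cong) (auto simp: ffr_fact le)
  also have "\<dots> = (\<Prod>i<n. ffr (lk a i) (lk b i)) * (\<Prod>i<n. fact (lk a i - lk b i))"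
    by (simp add: prod.distrib)
  finally have P: "(\<Prod>i<n. fact (lk a i) :: real) = (\<Prod>i<n. ffr (lk a i) (lk b i)) * (\<Prod>i<n. fact (lk a i - lk b i))" .
  have nz: "(\<Prod>i<n. fact (lk a i - lk b i) :: real) \<noteq> 0" by simp
  have mc: "mcoef n N (a - b) = fact N / (\<Prod>i<n. fact (lk a i - lk b i))"
    using k m by (simp add: mcoef_def lab)
  show ?thesis using True nz unfolding P mc by simp
next
  case False
  then obtain i where i: "lk a i < lk b i" unfolding ex_add_iff by (auto simp: not_le)
  then have "i \<in> ks b" by (auto simp: in_keys_iff)
  then have "i < n" using b unfolding monos_deg_def by auto
  then have "(\<Prod>i<n. ffr (lk a i) (lk b i)) = 0" using i ffr_zero by (intro prod_zero) auto
  then show ?thesis using False by simp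
qed

lemma coef_formula:
  assumes g: "is_form n e g" and a: "a \<in> monos_deg n (N + e)"
  shows "lk (sv n ^ N * g) a * (\<Prod>i<n. fact (lk a i))
         = fact N * (\<Sum>b\<in>ks g. lk g b * (\<Prod>i<n. ffr (lk a i) (lk b i)))"
proof -
  have "lk (sv n ^ N * g) a = (\<Sum>b\<in>ks g. (lk g b * mcoef n N (a - b) when (\<exists>c. a = b + c)))"
    by (simp add: mult.commute[of "sv n ^ N"] lookup_mult_sub lk_sv_pow)
  then have "lk (sv n ^ N * g) a * (\<Prod>i<n. fact (lk a i))
     = (\<Sum>b\<in>ks g. lk g b * ((mcoef n N (a - b) when (\<exists>c. a = b + c)) * (\<Prod>i<n. fact (lk a i))))"
    by (auto simp: sum_distrib_right when_def intro!: sum.cong)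
  also have "\<dots> = (\<Sum>b\<in>ks g. lk g b * (fact N * (\<Prod>i<n. ffr (lk a i) (lk b i))))"
    by (rule sum.cong[OF refl]) (use g a coef_term in \<open>auto simp: is_form_def\<close>)
  finally show ?thesis by (simp add: sum_distrib_left mult_ac)
qed

lemma prod_diff_bound:
  fixes x z :: "'a \<Rightarrow> real"
  assumes "finite K" "\<And>k. k \<in> K \<Longrightarrow> \<bar>x k\<bar> \<le> 1 \<and> \<bar>z k\<bar> \<le> 1"
  shows "\<bar>prod x K - prod z K\<bar> \<le> (\<Sum>k\<in>K. \<bar>x k - z k\<bar>)"
  using assms
proof (induction K rule: finite_induct)
  case empty then show ?case by simp
next
  case (insert k K)
  have zK: "\<bar>prod z K\<bar> \<le> 1" unfolding abs_prod
    by (rule prod_le_1) (use insert in auto)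
  have xk: "\<bar>x k\<bar> \<le> 1" "\<bar>z k\<bar> \<le> 1" using insert by auto
  have "prod x (insert k K) - prod z (insert k K) = x k * (prod x K - prod z K) + (x k - z k) * prod z K"
    using insert by (simp add: algebra_simps)
  then have "\<bar>prod x (insert k K) - prod z (insert k K)\<bar> \<le> \<bar>x k\<bar> * \<bar>prod x K - prod z K\<bar> + \<bar>x k - z k\<bar> * \<bar>prod z K\<bar>"
    using abs_triangle_ineq[of "x k * (prod x K - prod z K)" "(x k - z k) * prod z K"] by (simp add: abs_mult)
  also have "\<dots> \<le> 1 * \<bar>prod x K - prod z K\<bar> + \<bar>x k - z k\<bar> * 1"
    by (intro add_mono mult_mono) (use xk zK in auto)
  also have "\<dots> \<le> (\<Sum>k\<in>K. \<bar>x k - z k\<bar>) + \<bar>x k - z k\<bar>" using insert by simp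
  finally show ?case using insert by simp
qed

lemma ffr_scale:
  assumes "t > 0"
  shows "ffr a b = t ^ b * (\<Prod>j<b. (real a / t - real j / t))"
proof -
  have "ffr a b = (\<Prod>j<b. t * (real a / t - real j / t))"
    unfolding ffr_def by (rule prod.cong) (use assms in \<open>auto simp: field_simps\<close>)
  then show ?thesis by (simp add: prod.distrib)
qed

lemma Q_bound:
  fixes t :: real and y :: "nat \<Rightarrow> real"
  assumes b: "b \<in> monos_deg n e" and t: "t > 0" "real e \<le> t"
    and y: "\<And>i. i < n \<Longrightarrow> 0 \<le> y i \<and> y i \<le> 1"
  shows "\<bar>(\<Prod>i<n. \<Prod>j<lk b i. (y i - real j / t)) - (\<Prod>i<n. y i ^ lk b i)\<bar> \<le> real e * real e / t"
proof -
  have kb: "ks b \<subseteq> {..<n}" and mb: "mdeg b = e" using b unfolding monos_deg_def by auto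
  have se: "(\<Sum>i<n. lk b i) = e" using mdeg_lt[OF kb] mb by simp
  have bi: "lk b i \<le> e" if "i < n" for i
    using member_le_sum[of i "{..<n}" "lk b"] that se by simp
  have fac: "\<bar>y i - real j / t\<bar> \<le> 1" if "i < n" "j < lk b i" for i j
  proof -
    have "real j \<le> t" using bi[OF that(1)] that(2) t(2) by linarith
    then have "real j / t \<le> 1" "0 \<le> real j / t" using t by (auto simp: field_simps)
    then show ?thesis using y[OF that(1)] by linarith
  qed
  have inner: "\<bar>(\<Prod>j<lk b i. (y i - real j / t)) - y i ^ lk b i\<bar> \<le> real (lk b i) * (real e / t)"
    if i: "i < n" for i
  proof -
    have "\<bar>(\<Prod>j<lk b i. (y i - real j / t)) - (\<Prod>j<lk b i. y i)\<bar> \<le> (\<Sum>j<lk b i. \<bar>(y i - real j / t) - y i\<bar>)"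
      by (rule prod_diff_bound) (use fac[OF i] y[OF i] in auto)
    also have "\<dots> \<le> (\<Sum>j<lk b i. real e / t)"
    proof (rule sum_mono)
      fix j assume "j \<in> {..<lk b i}"
      then have "real j \<le> real e" using bi[OF i] by simp
      then show "\<bar>(y i - real j / t) - y i\<bar> \<le> real e / t" using t by (simp add: divide_right_mono)
    qed
    finally show ?thesis by simp
  qed
  have "\<bar>(\<Prod>i<n. \<Prod>j<lk b i. (y i - real j / t)) - (\<Prod>i<n. y i ^ lk b i)\<bar>
      \<le> (\<Sum>i<n. \<bar>(\<Prod>j<lk b i. (y i - real j / t)) - y i ^ lk b i\<bar>)"
  proof (rule prod_diff_bound)
    fix i assume "i \<in> {..<n}"
    then have i: "i < n" by simp
    have "\<bar>\<Prod>j<lk b i. (y i - real j / t)\<bar> \<le> 1" unfolding abs_prod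
      by (rule prod_le_1) (use fac[OF i] in auto)
    moreover have "\<bar>y i ^ lk b i\<bar> \<le> 1" using y[OF i] by (simp add: power_le_one)
    ultimately show "\<bar>\<Prod>j<lk b i. (y i - real j / t)\<bar> \<le> 1 \<and> \<bar>y i ^ lk b i\<bar> \<le> 1" by simp
  qed simp
  also have "\<dots> \<le> (\<Sum>i<n. real (lk b i) * (real e / t))"
    by (rule sum_mono) (use inner in auto)
  also have "\<dots> = real (\<Sum>i<n. lk b i) * (real e / t)"
    by (simp only: sum_distrib_right of_nat_sum)
  also have "\<dots> = real e * real e / t" using se by simp
  finally show ?thesis .
qed

lemma peval_form:
  assumes "is_form n e g"
  shows "peval g y = (\<Sum>b\<in>ks g. lk g b * (\<Prod>i<n. y i ^ lk b i))"
  unfolding peval_def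
proof (rule sum.cong[OF refl])
  fix b assume "b \<in> ks g"
  then have "ks b \<subseteq> {..<n}" using assms unfolding is_form_def monos_deg_def by auto
  then have "(\<Prod>i\<in>ks b. y i ^ lk b i) = (\<Prod>i<n. y i ^ lk b i)"
    by (intro prod.mono_neutral_left) (auto simp: in_keys_iff)
  then show "lk g b * (\<Prod>i\<in>ks b. y i ^ lk b i) = lk g b * (\<Prod>i<n. y i ^ lk b i)" by simp
qed

lemma fact_le_pow: "(fact (N + e) :: real) \<le> fact N * real (N + e) ^ e"
proof (induction e)
  case 0 then show ?case by simp
next
  case (Suc e)
  have "(fact (N + Suc e) :: real) = real (N + Suc e) * fact (N + e)" by (simp add: fact_Suc)
  also have "\<dots> \<le> real (N + Suc e) * (fact N * real (N + e) ^ e)"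
    by (rule mult_left_mono) (use Suc in auto)
  also have "\<dots> \<le> real (N + Suc e) * (fact N * real (N + Suc e) ^ e)"
    by (intro mult_left_mono power_mono) auto
  also have "\<dots> = fact N * real (N + Suc e) ^ Suc e" by simp
  finally show ?case .
qed

lemma continuous_peval: "continuous_on UNIV (\<lambda>y::nat \<Rightarrow> real. peval g y)"
  unfolding peval_def
  by (intro continuous_intros continuous_on_product_coordinates)

lemma simplex_min:
  assumes g: "is_form n e g" and n: "n \<ge> 1"
    and g_pos: "\<And>x :: nat \<Rightarrow> real. (\<forall>i<n. x i \<ge> 0) \<Longrightarrow> (\<exists>i<n. x i \<noteq> 0) \<Longrightarrow> peval g x > 0"
  shows "\<exists>m>0. \<forall>y. (\<forall>i<n. 0 \<le> y i) \<longrightarrow> (\<Sum>i<n. y i) = 1 \<longrightarrow> m \<le> peval g y"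
proof -
  define T where "T = (\<lambda>i::nat. if i < n then {0..1::real} else {0})"
  define S where "S = (Pi\<^sub>E UNIV T) \<inter> {y. (\<Sum>i<n. y i) = 1}"
  have cT: "compact (Pi\<^sub>E UNIV T)"
  proof -
    have "compactin (product_topology (\<lambda>i. euclidean) UNIV) (Pi\<^sub>E UNIV T)"
      unfolding compactin_PiE by (auto simp: T_def)
    then show ?thesis by (simp add: euclidean_product_topology)
  qed
  have cl: "closed {y::nat \<Rightarrow> real. (\<Sum>i<n. y i) = 1}"
    by (rule closed_Collect_eq) (intro continuous_intros continuous_on_product_coordinates)+
  have cS: "compact S" unfolding S_def using cT cl by blast
  define y0 where "y0 = (\<lambda>i::nat. if i = 0 then 1 else (0::real))"
  have "y0 \<in> S" using n unfolding S_def T_def y0_def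
    by (auto simp: sum.delta' PiE_iff)
  then have ne: "S \<noteq> {}" by blast
  obtain x0 where x0: "x0 \<in> S" "\<forall>y\<in>S. peval g x0 \<le> peval g y"
    using continuous_attains_inf[OF cS ne continuous_on_subset[OF continuous_peval subset_UNIV]] by blast
  have x0n: "\<forall>i<n. x0 i \<ge> 0"
  proof (intro allI impI)
    fix i assume "i < n"
    moreover have "x0 i \<in> T i" using x0(1) unfolding S_def by (auto simp: PiE_iff)
    ultimately show "x0 i \<ge> 0" unfolding T_def by auto
  qed
  have "\<exists>i<n. x0 i \<noteq> 0"
  proof (rule ccontr)
    assume "\<not> (\<exists>i<n. x0 i \<noteq> 0)"
    then have "(\<Sum>i<n. x0 i) = 0" by simp
    then show False using x0(1) unfolding S_def by simp
  qed
  then have pos: "peval g x0 > 0" using g_pos x0n by blast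
  show ?thesis
  proof (intro exI[of _ "peval g x0"] conjI allI impI pos)
    fix y :: "nat \<Rightarrow> real" assume y: "\<forall>i<n. 0 \<le> y i" "(\<Sum>i<n. y i) = 1"
    define y' where "y' = (\<lambda>i. if i < n then y i else 0)"
    have le1: "y i \<le> 1" if "i < n" for i
      using member_le_sum[of i "{..<n}" y] y that by auto
    have "y' \<in> S" unfolding S_def T_def y'_def using y le1 by (auto simp: PiE_iff)
    then have "peval g x0 \<le> peval g y'" using x0 by blast
    also have "peval g y' = peval g y" unfolding peval_form[OF g] y'_def by simp
    finally show "peval g x0 \<le> peval g y" .
  qed
qed

lemma polya:
  assumes g: "is_form n e g"
    and m: "m > 0" "\<forall>y. (\<forall>i<n. 0 \<le> y i) \<longrightarrow> (\<Sum>i<n. y i) = 1 \<longrightarrow> m \<le> peval g y"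
  shows "\<exists>N. cle (sc (m/2) * sv n ^ (N + e)) (sv n ^ N * g)"
proof -
  define A where "A = (\<Sum>b\<in>ks g. \<bar>lk g b\<bar>)"
  have A0: "A \<ge> 0" unfolding A_def by (simp add: sum_nonneg)
  define N where "N = nat \<lceil>2 * A * real e * real e / m\<rceil> + 1"
  define t where "t = real (N + e)"
  have tpos: "t > 0" unfolding t_def N_def by simp
  have te: "real e \<le> t" unfolding t_def by simp
  have tA: "2 * A * real e * real e / m \<le> t" unfolding t_def N_def by linarith
  have Ae: "A * (real e * real e / t) \<le> m / 2"
  proof -
    have "2 * A * real e * real e \<le> t * m" using tA m(1) by (simp add: field_simps)
    then show ?thesis using tpos by (simp add: field_simps)
  qed
  show ?thesis
  proof (intro exI[of _ N], unfold cle_iff, intro allI)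
    fix a
    show "lk (sc (m / 2) * sv n ^ (N + e)) a \<le> lk (sv n ^ N * g) a"
    proof (cases "a \<in> monos_deg n (N + e)")
      case False
      have "lk (sv n ^ N * g) a = 0"
        by (rule is_form_lookup[OF is_form_mult[OF is_form_sv_pow g] False])
      moreover have "lk (sc (m / 2) * sv n ^ (N + e)) a = 0"
        using False by (auto simp: lk_sc_mult lk_sv_pow mcoef_def monos_deg_def)
      ultimately show ?thesis by simp
    next
      case True
      have ka: "ks a \<subseteq> {..<n}" and ma: "mdeg a = N + e" using True unfolding monos_deg_def by auto
      have sa: "(\<Sum>i<n. lk a i) = N + e" using mdeg_lt[OF ka] ma by simp
      define P where "P = (\<Prod>i<n. fact (lk a i) :: real)"
      have Ppos: "P > 0" unfolding P_def by (simp add: prod_pos)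
      define y where "y = (\<lambda>i. real (lk a i) / t)"
      have y01: "0 \<le> y i \<and> y i \<le> 1" if "i < n" for i
      proof -
        have "lk a i \<le> N + e" using member_le_sum[of i "{..<n}" "lk a"] that sa by simp
        then show ?thesis unfolding y_def using tpos by (simp add: t_def field_simps)
      qed
      have ysum: "(\<Sum>i<n. y i) = 1"
      proof -
        have "(\<Sum>i<n. y i) = real (\<Sum>i<n. lk a i) / t" unfolding y_def by (simp add: sum_divide_distrib)
        then show ?thesis using sa tpos by (simp add: t_def)
      qed
      have my: "m \<le> peval g y" using m(2) y01 ysum by auto
      define Q where "Q = (\<lambda>b::nat \<Rightarrow>\<^sub>0 nat. \<Prod>i<n. \<Prod>j<lk b i. (y i - real j / t))"
      have ffrQ: "(\<Prod>i<n. ffr (lk a i) (lk b i)) = t ^ e * Q b" if b: "b \<in> ks g" for b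
      proof -
        have bm: "b \<in> monos_deg n e" using b g unfolding is_form_def by auto
        have se: "(\<Sum>i<n. lk b i) = e" using bm mdeg_lt[of b n] unfolding monos_deg_def by auto
        have "(\<Prod>i<n. ffr (lk a i) (lk b i)) = (\<Prod>i<n. t ^ lk b i * (\<Prod>j<lk b i. (y i - real j / t)))"
          unfolding y_def by (rule prod.cong[OF refl], rule ffr_scale[OF tpos])
        also have "\<dots> = (\<Prod>i<n. t ^ lk b i) * Q b" unfolding Q_def by (simp add: prod.distrib)
        also have "(\<Prod>i<n. t ^ lk b i) = t ^ e" using se by (simp add: power_sum[symmetric])
        finally show ?thesis .
      qed
      define S where "S = (\<Sum>b\<in>ks g. lk g b * Q b)"
      have cf: "lk (sv n ^ N * g) a * P = fact N * (t ^ e * S)"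
      proof -
        have "lk (sv n ^ N * g) a * P = fact N * (\<Sum>b\<in>ks g. lk g b * (\<Prod>i<n. ffr (lk a i) (lk b i)))"
          unfolding P_def by (rule coef_formula[OF g True])
        also have "(\<Sum>b\<in>ks g. lk g b * (\<Prod>i<n. ffr (lk a i) (lk b i))) = (\<Sum>b\<in>ks g. t ^ e * (lk g b * Q b))"
          by (rule sum.cong[OF refl]) (simp add: ffrQ)
        also have "\<dots> = t ^ e * S" unfolding S_def by (simp add: sum_distrib_left)
        finally show ?thesis .
      qed
      have "\<bar>S - peval g y\<bar> \<le> A * (real e * real e / t)"
      proof -
        have "S - peval g y = (\<Sum>b\<in>ks g. lk g b * (Q b - (\<Prod>i<n. y i ^ lk b i)))"
          unfolding S_def peval_form[OF g] by (simp add: sum_subtractf algebra_simps)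
        then have "\<bar>S - peval g y\<bar> \<le> (\<Sum>b\<in>ks g. \<bar>lk g b * (Q b - (\<Prod>i<n. y i ^ lk b i))\<bar>)"
          by (simp add: sum_abs)
        also have "\<dots> \<le> (\<Sum>b\<in>ks g. \<bar>lk g b\<bar> * (real e * real e / t))"
        proof (rule sum_mono)
          fix b assume b: "b \<in> ks g"
          have bm: "b \<in> monos_deg n e" using b g unfolding is_form_def by auto
          have "\<bar>Q b - (\<Prod>i<n. y i ^ lk b i)\<bar> \<le> real e * real e / t"
            unfolding Q_def by (rule Q_bound[OF bm tpos te y01])
          then show "\<bar>lk g b * (Q b - (\<Prod>i<n. y i ^ lk b i))\<bar> \<le> \<bar>lk g b\<bar> * (real e * real e / t)"
            unfolding abs_mult by (rule mult_left_mono) simp_all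
        qed
        also have "\<dots> = A * (real e * real e / t)" unfolding A_def by (simp only: sum_distrib_right)
        finally show ?thesis .
      qed
      then have Sm: "S \<ge> m / 2" using Ae my by linarith
      have "fact (N + e) * (m / 2) \<le> fact N * t ^ e * (m / 2)"
        using fact_le_pow[of N e] m(1) by (simp add: t_def)
      also have "\<dots> \<le> fact N * t ^ e * S"
        by (rule mult_left_mono[OF Sm]) (use tpos in simp)
      also have "\<dots> = lk (sv n ^ N * g) a * P" using cf by simp
      finally have ineq: "fact (N + e) * (m / 2) \<le> lk (sv n ^ N * g) a * P" .
      have "lk (sc (m / 2) * sv n ^ (N + e)) a = m / 2 * (fact (N + e) / P)"
        using ka ma by (simp add: lk_sc_mult lk_sv_pow mcoef_def P_def)
      also have "\<dots> \<le> lk (sv n ^ N * g) a"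
        using ineq Ppos by (simp add: field_simps)
      finally show ?thesis .
    qed
  qed
qed

lemma cnn_of_cle: "cle p q \<Longrightarrow> cnn p \<Longrightarrow> cnn q"
  unfolding cle_iff cnn_def by (meson order_trans)

lemma cle_neg: "cle p q \<Longrightarrow> cle (-q) (-p)"
  unfolding cle_iff by simp

lemma cle_sc_mono: "cle p q \<Longrightarrow> a \<ge> 0 \<Longrightarrow> cle (sc a * p) (sc a * q)"
  unfolding cle_iff lk_sc_mult by (simp add: mult_left_mono)

lemma cle_refl: "cle p p" unfolding cle_iff by simp

lemma of_nat_rpoly: "(of_nat k :: rpoly) = sc (real k)"
  unfolding sc_def by simp

lemma single_monos: "n \<ge> 1 \<Longrightarrow> Poly_Mapping.single 0 k \<in> monos_deg n k"
  unfolding monos_deg_def by (auto simp: mdeg_single)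

lemma binom_bound:
  assumes "k < K" "4 * K \<le> l"
  shows "real (l choose k) * ((real l - real K) / real K) \<le> real (l choose (k + K))"
proof -
  have K: "K \<ge> 1" using assms by simp
  have id: "(l - k) * (l choose k) = Suc k * (l choose Suc k)"
    using binomial_absorb_comp[of l k] binomial_absorption[of k l] by simp
  have "real (l choose k) * ((real l - real K) / real K) \<le> real (l choose k) * ((real l - real k) / real (Suc k))"
  proof (rule mult_left_mono)
    have "real l - real K \<le> real l - real k" using assms by simp
    moreover have "real (Suc k) \<le> real K" using assms by simp
    moreover have "0 \<le> real l - real K" using assms by simp
    ultimately have "(real l - real K) / real K \<le> (real l - real K) / real (Suc k)"
      by (intro divide_left_mono) auto
    also have "\<dots> \<le> (real l - real k) / real (Suc k)"
      by (rule divide_right_mono) (use assms in auto)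
    finally show "(real l - real K) / real K \<le> (real l - real k) / real (Suc k)" .
  qed simp
  also have "\<dots> = real (l choose Suc k)"
  proof -
    have "real (l - k) * real (l choose k) = real (Suc k) * real (l choose Suc k)"
      using id by (metis of_nat_mult)
    moreover have "real (l - k) = real l - real k" using assms by simp
    ultimately show ?thesis by (simp add: field_simps)
  qed
  also have "\<dots> \<le> real (l choose (k + K))"
    using binomial_mono[of "Suc k" "k + K" l] assms by simp
  finally show ?thesis .
qed

theorem mainTheorem4:
  fixes n d e :: nat and f g :: rpoly
  assumes f_form: "strictly_pos_form n d f"
    and f_nonconst: "d \<ge> 1" "f \<noteq> 0"
    and g_form: "is_form n e g"
    and g_pos: "\<And>x :: nat \<Rightarrow> real. (\<forall>i<n. x i \<ge> 0) \<Longrightarrow> (\<exists>i<n. x i \<noteq> 0) \<Longrightarrow> peval g x > 0"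
  shows "\<exists>l::nat. l \<ge> 1 \<and> strictly_pos_form n (l * d + e) (f ^ l * g)"
proof -
  have fform: "is_form n d f" and fpos: "\<And>w. w \<in> monos_deg n d \<Longrightarrow> lk f w > 0"
    using f_form unfolding strictly_pos_form_def by auto
  have fnn: "lk f w \<ge> 0" for w
    using fpos[of w] is_form_lookup[OF fform, of w] by (cases "w \<in> monos_deg n d") auto
  have n1: "n \<ge> 1"
  proof (rule ccontr)
    assume "\<not> n \<ge> 1"
    then have "n = 0" by simp
    have "ks f \<subseteq> monos_deg n d" using fform unfolding is_form_def .
    also have "monos_deg n d = {}" using \<open>n = 0\<close> f_nonconst(1)
      by (auto simp: monos_deg_def mdeg_def)
    finally show False using f_nonconst(2) by simp
  qed
  obtain m where m: "m > 0" "\<forall>y. (\<forall>i<n. 0 \<le> y i) \<longrightarrow> (\<Sum>i<n. y i) = 1 \<longrightarrow> m \<le> peval g y"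
    using simplex_min[OF g_form n1 g_pos] by blast
  define \<epsilon> where "\<epsilon> = m / 2"
  have \<epsilon>: "\<epsilon> > 0" using m unfolding \<epsilon>_def by simp
  obtain N where N: "cle (sc \<epsilon> * sv n ^ (N + e)) (sv n ^ N * g)"
    using polya[OF g_form m] unfolding \<epsilon>_def by blast
  define s where "s = sv n"
  define K where "K = N + 1"
  have K1: "K \<ge> 1" unfolding K_def by simp
  have polK: "cle (sc \<epsilon> * s ^ (d * k + e)) (s ^ (d * k) * g)" if k: "K \<le> k" for k
  proof -
    have "1 * k \<le> d * k" by (rule mult_le_mono1) (use f_nonconst(1) in simp)
    then have Nle: "N \<le> d * k" using k unfolding K_def by linarith
    have "cle (s ^ (d * k - N) * (sc \<epsilon> * s ^ (N + e))) (s ^ (d * k - N) * (s ^ N * g))"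
      by (rule cle_mult_left[OF N[folded s_def]]) (simp add: s_def cnn_sv_pow)
    moreover have "s ^ (d * k - N) * (sc \<epsilon> * s ^ (N + e)) = sc \<epsilon> * s ^ (d * k + e)"
    proof -
      have "s ^ (d * k - N) * (sc \<epsilon> * s ^ (N + e)) = sc \<epsilon> * (s ^ (d * k - N) * s ^ (N + e))"
        by (rule mult.left_commute)
      also have "s ^ (d * k - N) * s ^ (N + e) = s ^ (d * k + e)"
        by (simp only: power_add[symmetric]) (use Nle in simp)
      finally show ?thesis .
    qed
    moreover have "s ^ (d * k - N) * (s ^ N * g) = s ^ (d * k) * g"
    proof -
      have "s ^ (d * k - N) * (s ^ N * g) = (s ^ (d * k - N) * s ^ N) * g"
        by (rule mult.assoc[symmetric])
      also have "s ^ (d * k - N) * s ^ N = s ^ (d * k)"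
        by (simp only: power_add[symmetric]) (use Nle in simp)
      finally show ?thesis .
    qed
    ultimately show ?thesis by simp
  qed
  have cnn_s: "cnn (s ^ k)" for k unfolding s_def by (rule cnn_sv_pow)
  have sgnn: "cnn (s ^ (d * k) * g)" if "K \<le> k" for k
    by (rule cnn_of_cle[OF polK[OF that]]) (intro cnn_sc cnn_s, use \<epsilon> in simp)
  define D where "D = s ^ d"
  have Dform: "is_form n d D" unfolding D_def s_def by (rule is_form_sv_pow)
  have Dpos: "lk D w > 0" if "w \<in> monos_deg n d" for w unfolding D_def s_def using sv_pow_pos[OF that] .
  have Dnn: "cnn D" unfolding D_def by (rule cnn_s)
  have ksD: "w \<in> ks D \<longleftrightarrow> w \<in> monos_deg n d" for w
    using Dpos[of w] is_form_lookup[OF Dform, of w] by (auto simp: in_keys_iff)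
  define R where "R = (\<lambda>w. lk f w / lk D w) ` ks D"
  have Rfin: "finite R" unfolding R_def by simp
  have Rne: "R \<noteq> {}" unfolding R_def using ksD single_monos[OF n1, of d] by blast
  have Rpos: "r > 0" if "r \<in> R" for r
    using that unfolding R_def using ksD fpos Dpos by (auto intro!: divide_pos_pos)
  define c where "c = Min R"
  define C where "C = Max R"
  have c0: "c > 0" unfolding c_def using Rpos Rfin Rne by simp
  have cC: "c \<le> C"
  proof -
    obtain r where r: "r \<in> R" using Rne by blast
    have "c \<le> r" unfolding c_def using Rfin r by simp
    moreover have "r \<le> C" unfolding C_def using Rfin r by simp
    ultimately show ?thesis by linarith
  qed
  have C0: "C \<ge> 0" using c0 cC by simp
  have cDf: "c * lk D w \<le> lk f w" for w
  proof (cases "w \<in> ks D")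
    case True
    then have "c \<le> lk f w / lk D w" unfolding c_def R_def using Rfin by (simp add: R_def)
    moreover have "lk D w > 0" using True ksD Dpos by blast
    ultimately show ?thesis by (simp add: field_simps)
  next
    case False then show ?thesis using fnn by (simp add: in_keys_iff)
  qed
  have fCD: "lk f w \<le> C * lk D w" for w
  proof (cases "w \<in> ks D")
    case True
    then have "lk f w / lk D w \<le> C" unfolding C_def R_def using Rfin by (simp add: R_def)
    moreover have "lk D w > 0" using True ksD Dpos by blast
    ultimately show ?thesis by (simp add: field_simps)
  next
    case False
    then have "w \<notin> monos_deg n d" using ksD by blast
    then show ?thesis using is_form_lookup[OF fform] False by (simp add: in_keys_iff)
  qed
  define h where "h = f - sc c * D"
  have fh: "f = sc c * D + h" unfolding h_def by simp
  have hnn: "cnn h" unfolding cnn_def h_def using cDf by (simp add: lookup_minus lk_sc_mult)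
  have hC: "cle h (sc C * D)" unfolding cle_iff h_def lookup_minus lk_sc_mult
  proof
    fix w
    have "c * lk D w \<ge> 0" using c0 Dnn unfolding cnn_def by simp
    then show "lk f w - c * lk D w \<le> C * lk D w" using fCD[of w] by linarith
  qed
  define E where "E = s ^ e"
  have Eform: "is_form n e E" unfolding E_def s_def by (rule is_form_sv_pow)
  have Epos: "lk E w > 0" if "w \<in> monos_deg n e" for w unfolding E_def s_def using sv_pow_pos[OF that] .
  have ksE: "w \<in> ks E \<longleftrightarrow> w \<in> monos_deg n e" for w
    using Epos[of w] is_form_lookup[OF Eform, of w] by (auto simp: in_keys_iff)
  define RM where "RM = (\<lambda>w. \<bar>lk g w\<bar> / lk E w) ` ks E"
  have RMfin: "finite RM" unfolding RM_def by simp
  have RMne: "RM \<noteq> {}" unfolding RM_def using ksE single_monos[OF n1, of e] by blast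
  define M where "M = Max RM"
  have M0: "M \<ge> 0"
  proof -
    obtain r where "r \<in> RM" using RMne by blast
    moreover then have "r \<ge> 0" unfolding RM_def using ksE Epos by (auto intro!: divide_nonneg_pos)
    moreover have "r \<le> M" unfolding M_def using RMfin \<open>r \<in> RM\<close> by simp
    ultimately show ?thesis by linarith
  qed
  have gM: "cle (- (sc M * E)) g"
    unfolding cle_iff
  proof
    fix w
    show "lk (- (sc M * E)) w \<le> lk g w"
    proof (cases "w \<in> ks E")
      case True
      then have "\<bar>lk g w\<bar> / lk E w \<le> M" unfolding M_def RM_def using RMfin by (simp add: RM_def)
      moreover have "lk E w > 0" using True ksE Epos by blast
      ultimately have "\<bar>lk g w\<bar> \<le> M * lk E w" by (simp add: field_simps)
      then show ?thesis by (simp add: lk_sc_mult)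
    next
      case False
      then have "w \<notin> monos_deg n e" using ksE by blast
      then show ?thesis using is_form_lookup[OF g_form] False by (simp add: in_keys_iff lk_sc_mult)
    qed
  qed
  define R0 where "R0 = M * C ^ K / (c ^ K * \<epsilon>)"
  define l where "l = 4 * K + K * nat \<lceil>R0\<rceil>"
  have l4: "4 * K \<le> l" unfolding l_def by simp
  have l1: "l \<ge> 1" using l4 K1 by simp
  have lR: "R0 \<le> (real l - real K) / real K"
  proof -
    have "real l - real K = real K * (3 + real (nat \<lceil>R0\<rceil>))" unfolding l_def by (simp add: algebra_simps)
    then have "(real l - real K) / real K = 3 + real (nat \<lceil>R0\<rceil>)" using K1 by simp
    moreover have "R0 \<le> real (nat \<lceil>R0\<rceil>)" by linarith
    ultimately show ?thesis by simp
  qed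
  have bineq: "real (l choose k) * c ^ k * (M * C ^ K) \<le> real (l choose (k + K)) * c ^ (k + K) * \<epsilon>"
    if k: "k < K" for k
  proof -
    have R0nn: "R0 \<ge> 0" unfolding R0_def using M0 C0 c0 \<epsilon> by simp
    have "real (l choose k) * R0 \<le> real (l choose k) * ((real l - real K) / real K)"
      by (rule mult_left_mono[OF lR]) simp
    also have "\<dots> \<le> real (l choose (k + K))" by (rule binom_bound[OF k l4])
    finally have b: "real (l choose k) * R0 \<le> real (l choose (k + K))" .
    have "M * C ^ K = R0 * (c ^ K * \<epsilon>)" unfolding R0_def using c0 \<epsilon> by simp
    then have "real (l choose k) * c ^ k * (M * C ^ K) = c ^ k * (c ^ K * \<epsilon>) * (real (l choose k) * R0)"
      by (simp add: mult_ac)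
    also have "\<dots> \<le> c ^ k * (c ^ K * \<epsilon>) * real (l choose (k + K))"
      by (rule mult_left_mono[OF b]) (use c0 \<epsilon> in simp)
    also have "\<dots> = real (l choose (k + K)) * c ^ (k + K) * \<epsilon>" by (simp add: power_add mult_ac)
    finally show ?thesis .
  qed
  define T where "T = (\<lambda>k. sc (real (l choose k) * c ^ k) * (h ^ (l - k) * (s ^ (d * k) * g)))"
  have expand: "f ^ l * g = (\<Sum>k\<le>l. T k)"
  proof -
    have "f ^ l = (\<Sum>k\<le>l. of_nat (l choose k) * (sc c * D) ^ k * h ^ (l - k))"
      unfolding fh by (rule binomial_ring)
    then have "f ^ l * g = (\<Sum>k\<le>l. of_nat (l choose k) * (sc c * D) ^ k * h ^ (l - k) * g)"
      by (simp add: sum_distrib_right)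
    also have "\<dots> = (\<Sum>k\<le>l. T k)"
    proof (rule sum.cong[OF refl])
      fix k
      have "(of_nat (l choose k) :: rpoly) * (sc c * D) ^ k * h ^ (l - k) * g
          = (sc (real (l choose k)) * sc (c ^ k)) * (h ^ (l - k) * (s ^ (d * k) * g))"
        unfolding of_nat_rpoly power_mult_distrib sc_pow D_def power_mult by (simp add: mult_ac)
      then show "(of_nat (l choose k) :: rpoly) * (sc c * D) ^ k * h ^ (l - k) * g = T k"
        unfolding T_def sc_mult .
    qed
    finally show ?thesis .
  qed
  have Tnn: "cnn (T k)" if "K \<le> k" for k
    unfolding T_def using c0 by (intro cnn_sc cnn_mult cnn_pow hnn sgnn that) simp
  have Tpair: "cnn (T k + T (k + K))" if k: "k < K" for k
  proof -
    define j where "j = k + K"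
    have jl: "j \<le> l" unfolding j_def using k l4 by simp
    define P where "P = h ^ (l - j) * s ^ (d * j + e)"
    have Pnn: "cnn P" unfolding P_def by (intro cnn_mult cnn_pow hnn cnn_s)
    define Bk where "Bk = real (l choose k) * c ^ k"
    define Bj where "Bj = real (l choose j) * c ^ j"
    have Bk0: "Bk \<ge> 0" unfolding Bk_def using c0 by simp
    have Bj0: "Bj \<ge> 0" unfolding Bj_def using c0 by simp
    have a1: "cle (- (sc M * s ^ (d * k + e))) (s ^ (d * k) * g)"
    proof -
      have eq: "s ^ (d * k) * (- (sc M * E)) = - (sc M * s ^ (d * k + e))"
      proof -
        have "s ^ (d * k) * (- (sc M * E)) = - (sc M * (s ^ (d * k) * E))"
          by (simp only: mult_minus_right mult.left_commute)
        also have "s ^ (d * k) * E = s ^ (d * k + e)" unfolding E_def by (simp only: power_add)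
        finally show ?thesis .
      qed
      show ?thesis using cle_mult_left[OF gM cnn_s, of "d * k"] unfolding eq .
    qed
    have a2: "cle (h ^ (l - k) * s ^ (d * k + e)) (sc (C ^ K) * P)"
    proof -
      have hl: "h ^ (l - k) = h ^ K * h ^ (l - j)"
        using jl unfolding j_def by (simp add: power_add[symmetric])
      have "cle (h ^ K) ((sc C * D) ^ K)" by (rule cle_pow[OF hC hnn])
      then have "cle (h ^ K * (h ^ (l - j) * s ^ (d * k + e))) ((sc C * D) ^ K * (h ^ (l - j) * s ^ (d * k + e)))"
        by (rule cle_mult_right) (intro cnn_mult cnn_pow hnn cnn_s)
      moreover have "(sc C * D) ^ K * (h ^ (l - j) * s ^ (d * k + e)) = sc (C ^ K) * P"
      proof -
        have "d * j + e = d * K + (d * k + e)" unfolding j_def by (simp add: algebra_simps)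
        then show ?thesis unfolding P_def D_def power_mult_distrib sc_pow
          by (simp add: power_mult[symmetric] power_add mult_ac)
      qed
      ultimately show ?thesis unfolding hl by (simp add: mult_ac)
    qed
    have a: "cle (sc (- (Bk * M * C ^ K)) * P) (T k)"
    proof -
      have X: "cle (h ^ (l - k) * (- (sc M * s ^ (d * k + e)))) (h ^ (l - k) * (s ^ (d * k) * g))"
        by (rule cle_mult_left[OF a1]) (intro cnn_pow hnn)
      have Y: "h ^ (l - k) * (- (sc M * s ^ (d * k + e))) = - (sc M * (h ^ (l - k) * s ^ (d * k + e)))"
        by (simp only: mult_minus_right mult.left_commute)
      have Z: "cle (- (sc M * (sc (C ^ K) * P))) (- (sc M * (h ^ (l - k) * s ^ (d * k + e))))"
        by (rule cle_neg, rule cle_sc_mono[OF a2 M0])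
      have "cle (- (sc M * (sc (C ^ K) * P))) (h ^ (l - k) * (s ^ (d * k) * g))"
        using cle_trans[OF Z X[unfolded Y]] .
      then have "cle (sc Bk * (- (sc M * (sc (C ^ K) * P)))) (T k)"
        unfolding T_def Bk_def by (rule cle_sc_mono) (use Bk0 Bk_def in simp)
      moreover have "sc Bk * (- (sc M * (sc (C ^ K) * P))) = sc (- (Bk * M * C ^ K)) * P"
      proof -
        have "sc Bk * (- (sc M * (sc (C ^ K) * P))) = - ((sc Bk * sc M * sc (C ^ K)) * P)"
          by (simp add: mult_ac)
        also have "\<dots> = - (sc (Bk * M * C ^ K) * P)" by (simp add: sc_mult)
        also have "\<dots> = sc (- (Bk * M * C ^ K)) * P"
          by (simp add: poly_mapping_eq_iff fun_eq_iff lk_sc_mult)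
        finally show ?thesis .
      qed
      ultimately show ?thesis by simp
    qed
    have b: "cle (sc (Bj * \<epsilon>) * P) (T j)"
    proof -
      have Kj: "K \<le> j" unfolding j_def by simp
      have "cle (h ^ (l - j) * (sc \<epsilon> * s ^ (d * j + e))) (h ^ (l - j) * (s ^ (d * j) * g))"
        by (rule cle_mult_left[OF polK[OF Kj]]) (intro cnn_pow hnn)
      then have "cle (sc Bj * (h ^ (l - j) * (sc \<epsilon> * s ^ (d * j + e)))) (T j)"
        unfolding T_def Bj_def by (rule cle_sc_mono) (use Bj0 Bj_def in simp)
      moreover have "sc Bj * (h ^ (l - j) * (sc \<epsilon> * s ^ (d * j + e))) = sc (Bj * \<epsilon>) * P"
        unfolding P_def by (simp add: sc_mult[symmetric] mult_ac)
      ultimately show ?thesis by simp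
    qed
    have coef: "- (Bk * M * C ^ K) + Bj * \<epsilon> \<ge> 0"
      using bineq[OF k] unfolding Bk_def Bj_def j_def by (simp add: mult_ac)
    show ?thesis unfolding cnn_def
    proof
      fix w
      have "lk (T k) w \<ge> - (Bk * M * C ^ K) * lk P w" using a unfolding cle_iff lk_sc_mult by blast
      moreover have "lk (T j) w \<ge> Bj * \<epsilon> * lk P w" using b unfolding cle_iff lk_sc_mult by blast
      moreover have "(- (Bk * M * C ^ K) + Bj * \<epsilon>) * lk P w \<ge> 0"
        using coef Pnn unfolding cnn_def by simp
      ultimately show "0 \<le> lk (T k + T (k + K)) w" unfolding j_def lookup_add
        by (simp add: algebra_simps)
    qed
  qed
  have split: "(\<Sum>k\<le>l. T k) = T l + ((\<Sum>k\<in>{0..<K}. T k + T (k + K)) + (\<Sum>k\<in>{K + K..<l}. T k))"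
  proof -
    have i1: "{..l} = insert l {0..<l}" by auto
    have "(\<Sum>k\<le>l. T k) = T l + (\<Sum>k\<in>{0..<l}. T k)" unfolding i1 by (rule sum.insert) auto
    also have "(\<Sum>k\<in>{0..<l}. T k) = (\<Sum>k\<in>{0..<K+K}. T k) + (\<Sum>k\<in>{K+K..<l}. T k)"
      by (rule sum.atLeastLessThan_concat[symmetric]) (use l4 in auto)
    also have "(\<Sum>k\<in>{0..<K+K}. T k) = (\<Sum>k\<in>{0..<K}. T k) + (\<Sum>k\<in>{K..<K+K}. T k)"
      by (rule sum.atLeastLessThan_concat[symmetric]) auto
    also have "(\<Sum>k\<in>{K..<K+K}. T k) = (\<Sum>k\<in>{0..<K}. T (k + K))"
      using sum.shift_bounds_nat_ivl[of T 0 K K] by simp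
    also have "(\<Sum>k\<in>{0..<K}. T k) + (\<Sum>k\<in>{0..<K}. T (k + K)) = (\<Sum>k\<in>{0..<K}. T k + T (k + K))"
      by (rule sum.distrib[symmetric])
    finally show ?thesis .
  qed
  have rest: "cnn ((\<Sum>k\<in>{0..<K}. T k + T (k + K)) + (\<Sum>k\<in>{K + K..<l}. T k))"
    by (intro cnn_add cnn_sum Tpair Tnn) auto
  have Tl: "cle (sc (c ^ l * \<epsilon>) * s ^ (d * l + e)) (T l)"
  proof -
    have "cle (sc (c ^ l) * (sc \<epsilon> * s ^ (d * l + e))) (sc (c ^ l) * (s ^ (d * l) * g))"
      by (rule cle_sc_mono[OF polK]) (use l4 c0 in simp_all)
    then show ?thesis unfolding T_def by (simp add: sc_mult[symmetric] mult_ac)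
  qed
  have main: "cle (sc (c ^ l * \<epsilon>) * s ^ (d * l + e)) (f ^ l * g)"
  proof -
    have "cle (T l) (f ^ l * g)" unfolding expand split cle_def using rest by simp
    then show ?thesis using Tl cle_trans by blast
  qed
  have "strictly_pos_form n (l * d + e) (f ^ l * g)"
    unfolding strictly_pos_form_def
  proof
    show "is_form n (l * d + e) (f ^ l * g)" by (rule is_form_mult[OF is_form_pow[OF fform] g_form])
    show "\<forall>w\<in>monos_deg n (l * d + e). 0 < lk (f ^ l * g) w"
    proof
      fix w assume w: "w \<in> monos_deg n (l * d + e)"
      then have "lk (s ^ (d * l + e)) w > 0" unfolding s_def by (intro sv_pow_pos) (simp add: mult.commute)
      moreover have "c ^ l * \<epsilon> > 0" using c0 \<epsilon> by simp
      ultimately have "0 < c ^ l * \<epsilon> * lk (s ^ (d * l + e)) w" by simp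
      also have "\<dots> \<le> lk (f ^ l * g) w" using main unfolding cle_iff lk_sc_mult by blast
      finally show "0 < lk (f ^ l * g) w" .
    qed
  qed
  then show ?thesis using l1 by blast
qed

end
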